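(* Let $n\ge1$, $\gamma\in(0,1]$, $\beta=\frac{2}{2-\gamma}$ and $\vartheta>0$. Then there exists $c>0$, depending only on $n,\gamma,\vartheta$, such that for every $\varepsilon>0$, every nonnegative classical solution $u_\varepsilon$ of $\partial_tu_\varepsilon-\Delta u_\varepsilon=-f_\varepsilon(u_\varepsilon)$ in $Q_1$, every $r\in(0,\frac14)$ and every $(x_\circ,t_\circ)\in\{u_\varepsilon\ge\vartheta\varepsilon^\beta\}\cap Q_{1/2}$, $$\sup_{Q_r^-(x_\circ,t_\circ)}u_\varepsilon\ge c(\varepsilon^2+r^2)^{\frac{1}{2-\gamma}}.$$
   Context: $h:\mathbb{R}\to[0,\infty)$ vanishes outside $[0,1]$, is $C^1$ on $[0,1]$, $h(0)=0$, $h'(0)>0$, $\int_0^1h=1$; $H(u)=\int_0^uh$ for $u>0$, $0$ otherwise; $f_\varepsilon(u)=\varepsilon^{-\beta}h(u/\varepsilon^\beta)u^\gamma+\gamma H(u/\varepsilon^\beta)u^{\gamma-1}$ for $u>0$, $f_\varepsilon(u)=0$ for $u\le0$. $Q_r(x,t)=B_r(x)\times(t-r^2,t+r^2)$, $Q_r^-(x,t)=B_r(x)\times(t-r^2,t)$, $Q_r=Q_r(0,0)$. *)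

theory Defs
  imports "HOL-Analysis.Analysis"
begin

definition admissible_h :: "(real \<Rightarrow> real) \<Rightarrow> bool" where
  "admissible_h h \<longleftrightarrow>
     (\<forall>s. h s \<ge> 0) \<and> (\<forall>s. s \<notin> {0..1} \<longrightarrow> h s = 0) \<and>
     (\<exists>h'. (\<forall>s\<in>{0..1}. (h has_real_derivative h' s) (at s within {0..1}))
           \<and> continuous_on {0..1} h' \<and> h' 0 > 0) \<and>
     h 0 = 0 \<and> integral {0..1} h = 1"

definition Hprim :: "(real \<Rightarrow> real) \<Rightarrow> real \<Rightarrow> real" where
  "Hprim h u = (if u > 0 then integral {0..u} h else 0)"

definition f_eps :: "(real \<Rightarrow> real) \<Rightarrow> real \<Rightarrow> real \<Rightarrow> real \<Rightarrow> real \<Rightarrow> real" where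
  "f_eps h \<beta> \<gamma> \<epsilon> u =
     (if u > 0 then \<epsilon> powr (-\<beta>) * h (u / \<epsilon> powr \<beta>) * u powr \<gamma>
                   + \<gamma> * Hprim h (u / \<epsilon> powr \<beta>) * u powr (\<gamma> - 1)
      else 0)"

definition Qcyl :: "real^'n \<Rightarrow> real \<Rightarrow> real \<Rightarrow> ((real^'n) \<times> real) set" where
  "Qcyl x t r = ball x r \<times> {t - r\<^sup>2 <..< t + r\<^sup>2}"

definition Qminus :: "real^'n \<Rightarrow> real \<Rightarrow> real \<Rightarrow> ((real^'n) \<times> real) set" where
  "Qminus x t r = ball x r \<times> {t - r\<^sup>2 <..< t}"

text \<open>Classical (C^{2,1}) solution of  u_t - Laplacian u = F(u)  in an open set \<Omega>:
  ut is the time derivative, g the spatial gradient, Hs the spatial Hessian (as a linear map);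
  all are continuous on \<Omega>, and the Laplacian is the trace of the Hessian.\<close>
definition classical_heat_sol ::
  "(real^'n \<Rightarrow> real \<Rightarrow> real) \<Rightarrow> (real \<Rightarrow> real) \<Rightarrow> ((real^'n) \<times> real) set \<Rightarrow> bool" where
  "classical_heat_sol u F \<Omega> \<longleftrightarrow>
     (\<exists>ut g Hs.
        continuous_on \<Omega> (\<lambda>(x,t). u x t) \<and>
        continuous_on \<Omega> (\<lambda>(x,t). ut x t) \<and>
        continuous_on \<Omega> (\<lambda>(x,t). g x t) \<and>
        (\<forall>i j. continuous_on \<Omega> (\<lambda>(x,t). Hs x t (axis j 1) $ i)) \<and>
        (\<forall>(x,t)\<in>\<Omega>.
           ((\<lambda>s. u x s) has_real_derivative ut x t) (at t) \<and>
           ((\<lambda>y. u y t) has_derivative (\<lambda>v. g x t \<bullet> v)) (at x) \<and>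
           ((\<lambda>y. g y t) has_derivative Hs x t) (at x) \<and>
           ut x t - (\<Sum>i\<in>UNIV. Hs x t (axis i 1) $ i) = F (u x t)))"

end

theory Submission
  imports Defs
begin

lemma second_deriv_max:
  fixes \<phi> \<phi>' :: "real \<Rightarrow> real"
  assumes d: "d > 0"
    and der: "\<And>s. \<bar>s\<bar> < d \<Longrightarrow> (\<phi> has_real_derivative \<phi>' s) (at s)"
    and der2: "(\<phi>' has_real_derivative D) (at 0)"
    and mx: "\<And>s. \<bar>s\<bar> < d \<Longrightarrow> \<phi> s \<le> \<phi> 0"
  shows "D \<le> 0"
proof (rule ccontr)
  assume "\<not> D \<le> 0"
  hence Dp: "D > 0" by simp
  have z: "\<phi>' 0 = 0"
    using DERIV_local_max[OF der[of 0] d] mx d by auto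
  obtain d' where d': "d' > 0" "\<forall>h>0. h < d' \<longrightarrow> \<phi>' 0 < \<phi>' (0 + h)"
    using DERIV_pos_inc_right[OF der2 Dp] by blast
  define s where "s = min d d' / 2"
  have s: "s > 0" "s < d" "s < d'" using d d'(1) by (auto simp: s_def)
  obtain z where zz: "0 < z" "z < s" "\<phi> s - \<phi> 0 = (s - 0) * \<phi>' z"
    using MVT2[of 0 s \<phi> \<phi>'] s der by force
  have "\<phi>' z > 0" using d'(2) zz s z by force
  hence "s * \<phi>' z > 0" using s by simp
  hence "\<phi> s > \<phi> 0" using zz by simp
  thus False using mx[of s] s by simp
qed

lemma h_facts:
  assumes "admissible_h h"
  shows "h integrable_on {a..b}"
    and "\<And>a b. 0 < a \<Longrightarrow> a \<le> b \<Longrightarrow> Hprim h a \<le> Hprim h b"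
    and "\<And>a. 0 < a \<Longrightarrow> Hprim h a > 0"
proof -
  have nn: "\<And>s. h s \<ge> 0" and z: "\<And>s. s \<notin> {0..1} \<Longrightarrow> h s = 0" and h0: "h 0 = 0"
    using assms unfolding admissible_h_def by auto
  obtain h' where hd: "\<forall>s\<in>{0..1}. (h has_real_derivative h' s) (at s within {0..1})" and h'0: "h' 0 > 0"
    using assms unfolding admissible_h_def by auto
  have cont: "continuous_on {0..1} h"
    using hd by (metis DERIV_continuous continuous_on_eq_continuous_within)
  have "h integrable_on {0..1}" using cont integrable_continuous_real by blast
  hence "(\<lambda>x. if x \<in> {0..1} then h x else 0) integrable_on UNIV"
    using integrable_restrict_UNIV by blast
  moreover have "(\<lambda>x. if x \<in> {0..1} then h x else (0::real)) = h" using z by auto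
  ultimately have iU: "h integrable_on UNIV" by simp
  thus ia: "\<And>a b. h integrable_on {a..b}" using integrable_on_subinterval by blast
  show mono: "\<And>a b. 0 < a \<Longrightarrow> a \<le> b \<Longrightarrow> Hprim h a \<le> Hprim h b"
    unfolding Hprim_def using ia nn by (auto intro!: integral_subset_le)
  have lim: "((\<lambda>y. (h y - h 0) / (y - 0)) \<longlongrightarrow> h' 0) (at 0 within {0..1})"
    using hd has_field_derivative_iff[of h "h' 0" 0 "{0..1}"] by auto
  hence "\<forall>\<^sub>F y in at 0 within {0..1}. (h y - h 0) / (y - 0) > 0"
    using h'0 order_tendstoD(1) by blast
  then obtain \<delta> where \<delta>: "\<delta> > 0" "\<And>y. y \<in> {0..1} \<Longrightarrow> y \<noteq> 0 \<Longrightarrow> dist y 0 < \<delta> \<Longrightarrow> (h y - h 0) / (y - 0) > 0"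
    unfolding eventually_at by blast
  have pos: "\<And>y. 0 < y \<Longrightarrow> y \<le> 1 \<Longrightarrow> y < \<delta> \<Longrightarrow> h y > 0"
  proof -
    fix y :: real assume y: "0 < y" "y \<le> 1" "y < \<delta>"
    have "(h y - h 0) / (y - 0) > 0" using \<delta>(2)[of y] y by auto
    thus "h y > 0" using y h0 by (simp add: zero_less_divide_iff)
  qed
  show "\<And>a. 0 < a \<Longrightarrow> Hprim h a > 0"
  proof -
    fix a :: real assume a: "0 < a"
    define b where "b = min a (min 1 (\<delta>/2))"
    have b: "0 < b" "b \<le> a" "b \<le> 1" "b < \<delta>" using a \<delta> by (auto simp: b_def)
    have "Hprim h b > 0"
    proof (rule ccontr)
      assume "\<not> Hprim h b > 0"
      moreover have "Hprim h b \<ge> 0" unfolding Hprim_def using b nn by (simp add: integral_nonneg ia)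
      ultimately have i0: "integral {0..b} h = 0" using b unfolding Hprim_def by simp
      have "(h has_integral 0) (cbox 0 b)" using i0 ia[of 0 b] by (metis cbox_interval has_integral_integral)
      moreover have "continuous_on (cbox 0 b) h" using cont b by (auto intro: continuous_on_subset)
      ultimately have "h b = 0"
        using has_integral_0_cbox_imp_0[of 0 b h b] b nn by auto
      thus False using pos[of b] b by simp
    qed
    thus "Hprim h a > 0" using mono[of b a] b by simp
  qed
qed

lemma norm_path_sq:
  fixes a :: "real^'n"
  shows "(norm (a + s *\<^sub>R axis i 1))\<^sup>2 = (norm a)\<^sup>2 + 2 * s * a $ i + s\<^sup>2"
proof -
  have "(norm (a + s *\<^sub>R axis i 1))\<^sup>2 = (a + s *\<^sub>R axis i 1) \<bullet> (a + s *\<^sub>R axis i 1)"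
    by (simp add: power2_norm_eq_inner)
  also have "\<dots> = a \<bullet> a + 2 * s * (a \<bullet> axis i 1) + s\<^sup>2 * (axis i 1 \<bullet> axis i (1::real))"
    by (simp add: inner_add_left inner_add_right inner_commute power2_eq_square algebra_simps)
  also have "\<dots> = (norm a)\<^sup>2 + 2 * s * a $ i + s\<^sup>2"
    by (simp add: inner_axis inner_axis_axis power2_norm_eq_inner)
  finally show ?thesis .
qed

lemma spatial_max:
  fixes u :: "real^'n \<Rightarrow> real" and g :: "real^'n \<Rightarrow> real^'n" and H :: "real^'n \<Rightarrow> real^'n"
  assumes d: "\<delta> > 0"
    and du: "\<And>y. y \<in> ball xs \<delta> \<Longrightarrow> (u has_derivative (\<lambda>v. g y \<bullet> v)) (at y)"
    and dg: "(g has_derivative H) (at xs)"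
    and mx: "\<And>y. y \<in> ball xs \<delta> \<Longrightarrow> u y - l * (norm (y - x0))\<^sup>2 \<le> u xs - l * (norm (xs - x0))\<^sup>2"
  shows "H (axis i 1) $ i \<le> 2 * l"
proof -
  define e :: "real^'n" where "e = axis i 1"
  define a where "a = xs - x0"
  define \<phi> where "\<phi> s = u (xs + s *\<^sub>R e) - l * ((norm a)\<^sup>2 + 2 * s * a $ i + s\<^sup>2)" for s
  define \<phi>' where "\<phi>' s = g (xs + s *\<^sub>R e) $ i - l * (2 * a $ i + 2 * s)" for s
  have ne: "norm e = 1" by (simp add: e_def)
  have inb: "xs + s *\<^sub>R e \<in> ball xs \<delta>" if "\<bar>s\<bar> < \<delta>" for s
    using that ne by (simp add: dist_norm)
  have phieq: "\<phi> s = u (xs + s *\<^sub>R e) - l * (norm (xs + s *\<^sub>R e - x0))\<^sup>2" for s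
  proof -
    have "xs + s *\<^sub>R e - x0 = a + s *\<^sub>R axis i 1" by (simp add: a_def e_def)
    thus ?thesis unfolding \<phi>_def using norm_path_sq[of a s i] by simp
  qed
  have der: "(\<phi> has_real_derivative \<phi>' s) (at s)" if "\<bar>s\<bar> < \<delta>" for s
  proof -
    have p: "((\<lambda>s. xs + s *\<^sub>R e) has_derivative (\<lambda>h. h *\<^sub>R e)) (at s)"
      by (auto intro!: derivative_eq_intros)
    have "((\<lambda>s. u (xs + s *\<^sub>R e)) has_derivative ((\<lambda>v. g (xs + s *\<^sub>R e) \<bullet> v) \<circ> (\<lambda>h. h *\<^sub>R e))) (at s)"
      using diff_chain_at[OF p du[OF inb[OF that]]] by (simp add: o_def)
    moreover have "((\<lambda>v. g (xs + s *\<^sub>R e) \<bullet> v) \<circ> (\<lambda>h. h *\<^sub>R e)) = (*) (g (xs + s *\<^sub>R e) $ i)"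
      by (auto simp: o_def e_def inner_axis)
    ultimately have "((\<lambda>s. u (xs + s *\<^sub>R e)) has_real_derivative g (xs + s *\<^sub>R e) $ i) (at s)"
      by (simp add: has_field_derivative_def)
    then show ?thesis unfolding \<phi>_def \<phi>'_def
      by (auto intro!: derivative_eq_intros simp: algebra_simps power2_eq_square)
  qed
  have der2: "(\<phi>' has_real_derivative (H e $ i - 2 * l)) (at 0)"
  proof -
    have p: "((\<lambda>s. xs + s *\<^sub>R e) has_derivative (\<lambda>h. h *\<^sub>R e)) (at 0)"
      by (auto intro!: derivative_eq_intros)
    have dg': "(g has_derivative H) (at (xs + 0 *\<^sub>R e))" using dg by simp
    have "((\<lambda>s. g (xs + s *\<^sub>R e)) has_derivative (H \<circ> (\<lambda>h. h *\<^sub>R e))) (at 0)"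
      using diff_chain_at[OF p dg'] by (simp add: o_def)
    hence "((\<lambda>s. g (xs + s *\<^sub>R e) $ i) has_derivative (\<lambda>h. (H \<circ> (\<lambda>h. h *\<^sub>R e)) h $ i)) (at 0)"
      using bounded_linear.has_derivative[OF bounded_linear_vec_nth] by blast
    moreover have "linear H" using dg has_derivative_linear by blast
    hence "(\<lambda>h. (H \<circ> (\<lambda>h. h *\<^sub>R e)) h $ i) = (*) (H e $ i)"
      by (auto simp: o_def linear_scale)
    ultimately have "((\<lambda>s. g (xs + s *\<^sub>R e) $ i) has_real_derivative H e $ i) (at 0)"
      by (simp add: has_field_derivative_def)
    then show ?thesis unfolding \<phi>'_def
      by (auto intro!: derivative_eq_intros simp: algebra_simps)
  qed
  have mx': "\<phi> s \<le> \<phi> 0" if "\<bar>s\<bar> < \<delta>" for s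
    using mx[OF inb[OF that]] phieq[of s] phieq[of 0] by simp
  have "H e $ i - 2 * l \<le> 0" using second_deriv_max[OF d der der2 mx'] by blast
  thus ?thesis by (simp add: e_def)
qed

lemma core:
  fixes u :: "real^'n \<Rightarrow> real \<Rightarrow> real" and h :: "real \<Rightarrow> real"
  assumes adm: "admissible_h h"
    and g0: "0 < \<gamma>" and g1: "\<gamma> \<le> 1"
    and th: "\<theta> > 0" and ep: "\<epsilon> > 0"
    and sol: "classical_heat_sol u (\<lambda>v. - f_eps h \<beta> \<gamma> \<epsilon> v) (Qcyl 0 0 1)"
    and r0: "0 < r" and r1: "r < 1/4"
    and x0Q: "(x0, t0) \<in> Qcyl 0 0 (1/2)" and ux0: "u x0 t0 \<ge> \<theta> * \<epsilon> powr \<beta>"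
  shows "(SUP (x,t)\<in>Qminus x0 t0 r. u x t) \<ge> \<theta> * \<epsilon> powr \<beta> \<and>
         (SUP (x,t)\<in>Qminus x0 t0 r. u x t) \<ge> (\<gamma> * Hprim h (min \<theta> 1)) *
            (SUP (x,t)\<in>Qminus x0 t0 r. u x t) powr (\<gamma> - 1) * r\<^sup>2 / (8 * real CARD('n))"
proof -
  define Q1 where "Q1 = Qcyl (0::real^'n) 0 1"
  obtain ut g Hs where
    cont: "continuous_on Q1 (\<lambda>(x,t). u x t)" and
    eqs: "\<forall>(x,t)\<in>Q1.
           ((\<lambda>s. u x s) has_real_derivative ut x t) (at t) \<and>
           ((\<lambda>y. u y t) has_derivative (\<lambda>v. g x t \<bullet> v)) (at x) \<and>
           ((\<lambda>y. g y t) has_derivative Hs x t) (at x) \<and>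
           ut x t - (\<Sum>i\<in>UNIV. Hs x t (axis i 1) $ i) = - f_eps h \<beta> \<gamma> \<epsilon> (u x t)"
    using sol unfolding classical_heat_sol_def Q1_def by blast
  define U where "U = (\<lambda>(x::real^'n,t::real). u x t)"
  have Ux[simp]: "U (x,t) = u x t" for x t by (simp add: U_def)
  define Qm where "Qm = Qminus x0 t0 r"
  define C where "C = cball x0 r \<times> {t0 - r\<^sup>2 .. t0}"
  define M where "M = (SUP (x,t)\<in>Qminus x0 t0 r. u x t)"
  have MU: "M = Sup (U ` Qm)" by (simp add: M_def U_def Qm_def)
  have r2: "r\<^sup>2 < 1/16"
  proof -
    have "r\<^sup>2 < (1/4)\<^sup>2" using power_strict_mono[of r "1/4" 2] r0 r1 by simp
    thus ?thesis by (simp add: power2_eq_square)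
  qed
  have r2p: "r\<^sup>2 > 0" using r0 by simp
  have x0b: "norm x0 < 1/2" "-1/4 < t0" "t0 < 1/4"
    using x0Q by (auto simp: Qcyl_def dist_norm power2_eq_square)
  have CQ: "C \<subseteq> Q1"
  proof
    fix z assume "z \<in> C"
    then obtain x t where z: "z = (x,t)" "dist x0 x \<le> r" "t0 - r\<^sup>2 \<le> t" "t \<le> t0"
      unfolding C_def by (cases z) auto
    have "norm x \<le> norm x0 + norm (x - x0)"
      by (metis add.commute diff_add_cancel norm_triangle_ineq)
    moreover have "norm (x - x0) = dist x0 x" by (simp add: dist_norm norm_minus_commute)
    ultimately have "norm x < 1" using z x0b r1 by linarith
    thus "z \<in> Q1" using z x0b r2 by (simp add: Q1_def Qcyl_def dist_norm)
  qed
  have QmC: "Qm \<subseteq> C" by (auto simp: Qm_def C_def Qminus_def)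
  have clQ: "closure Qm = C"
    using r0 r2p by (simp add: Qm_def C_def Qminus_def closure_Times)
  have contC: "continuous_on C U" using continuous_on_subset[OF cont CQ] by (simp add: U_def)
  have compC: "compact C" unfolding C_def by (intro compact_Times compact_cball compact_Icc)
  have bdd: "bdd_above (U ` Qm)"
  proof -
    have "bounded (U ` C)" using compact_continuous_image[OF contC compC] compact_imp_bounded by blast
    hence "bdd_above (U ` C)" by (rule bounded_imp_bdd_above)
    thus ?thesis using QmC by (meson bdd_above_mono image_mono)
  qed
  have ne: "Qm \<noteq> {}"
  proof -
    have "(x0, t0 - r\<^sup>2/2) \<in> Qm" using r0 r2p by (simp add: Qm_def Qminus_def)
    thus ?thesis by blast
  qed
  have Ule: "U z \<le> M" if "z \<in> C" for z
  proof -
    have cc: "continuous_on (closure Qm) U" using contC clQ by simp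
    show ?thesis
      using continuous_le_on_closure[OF cc, of z M] that clQ bdd MU
      by (auto intro: cSUP_upper)
  qed
  have x0C: "(x0,t0) \<in> C" using r2p r0 by (simp add: C_def)
  have M1: "M \<ge> \<theta> * \<epsilon> powr \<beta>" using Ule[OF x0C] ux0 by simp
  have Mpos: "M > 0" using M1 th ep by (smt (verit) mult_pos_pos powr_gt_zero)
  define \<kappa> where "\<kappa> = \<gamma> * Hprim h (min \<theta> 1)"
  have kpos: "\<kappa> > 0" unfolding \<kappa>_def using h_facts(3)[OF adm, of "min \<theta> 1"] th g0 by simp
  have fbound: "f_eps h \<beta> \<gamma> \<epsilon> v \<ge> \<kappa> * M powr (\<gamma> - 1)"
    if v1: "\<theta> * \<epsilon> powr \<beta> \<le> v" and v2: "v \<le> M" for v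
  proof -
    have ebp: "\<epsilon> powr \<beta> > 0" using ep by simp
    have vp: "v > 0" using v1 th ebp by (smt (verit) mult_pos_pos)
    have t1: "\<epsilon> powr (-\<beta>) * h (v / \<epsilon> powr \<beta>) * v powr \<gamma> \<ge> 0"
      using adm unfolding admissible_h_def by simp
    have "v / \<epsilon> powr \<beta> \<ge> \<theta>" using v1 ebp by (simp add: pos_le_divide_eq)
    hence "min \<theta> 1 \<le> v / \<epsilon> powr \<beta>" by simp
    hence H: "Hprim h (min \<theta> 1) \<le> Hprim h (v / \<epsilon> powr \<beta>)"
      using h_facts(2)[OF adm, of "min \<theta> 1"] th by simp
    have H0: "Hprim h (min \<theta> 1) > 0" using h_facts(3)[OF adm, of "min \<theta> 1"] th by simp
    have P: "M powr (\<gamma> - 1) \<le> v powr (\<gamma> - 1)" using powr_mono2'[of "\<gamma> - 1" v M] g1 vp v2 by simp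
    have "\<kappa> * M powr (\<gamma> - 1) \<le> \<gamma> * Hprim h (v / \<epsilon> powr \<beta>) * v powr (\<gamma> - 1)"
      unfolding \<kappa>_def using H H0 P g0
      by (intro mult_mono mult_left_mono) (auto intro: less_imp_le)
    thus ?thesis unfolding f_eps_def using vp t1 by simp
  qed
  define n where "n = real CARD('n)"
  have n1: "n \<ge> 1" unfolding n_def by simp
  define l where "l = \<kappa> * M powr (\<gamma> - 1) / (8 * n)"
  have lpos: "l > 0" unfolding l_def using kpos Mpos n1 by simp
  define W where "W z = U z - l * ((norm (fst z - x0))\<^sup>2 + 2 * n * (t0 - snd z))" for z
  have Wx[simp]: "W (x,t) = u x t - l * ((norm (x - x0))\<^sup>2 + 2 * n * (t0 - t))" for x t
    by (simp add: W_def)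
  have contW: "continuous_on C W" unfolding W_def
    by (intro continuous_intros contC)
  have Cne: "C \<noteq> {}" using x0C by blast
  obtain zs where zsC: "zs \<in> C" and zmax: "\<forall>y\<in>C. W y \<le> W zs"
    using continuous_attains_sup[OF compC Cne contW] by blast
  obtain xs ts where zs: "zs = (xs, ts)" by (cases zs)
  have xsC: "dist x0 xs \<le> r" "t0 - r\<^sup>2 \<le> ts" "ts \<le> t0" using zsC zs by (auto simp: C_def)
  have nxs: "norm (xs - x0) = dist x0 xs" by (simp add: dist_norm norm_minus_commute)
  have Wge: "W (xs,ts) \<ge> u x0 t0" using zmax x0C zs by force
  have usge: "u xs ts \<ge> W (xs, ts)" using lpos xsC n1 by simp
  have usM: "u xs ts \<le> M" using Ule zsC zs by force
  have bdry: "norm (xs - x0) \<ge> r \<or> ts \<le> t0 - r\<^sup>2"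
  proof (rule ccontr)
    assume "\<not> ?thesis"
    hence int: "norm (xs - x0) < r" "ts > t0 - r\<^sup>2" by auto
    have xsQ: "(xs,ts) \<in> Q1" using zsC zs CQ by blast
    have dt: "((\<lambda>s. u xs s) has_real_derivative ut xs ts) (at ts)" using eqs xsQ by blast
    have eqn: "ut xs ts - (\<Sum>i\<in>UNIV. Hs xs ts (axis i 1) $ i) = - f_eps h \<beta> \<gamma> \<epsilon> (u xs ts)"
      using eqs xsQ by blast
    have dHs: "((\<lambda>y. g y ts) has_derivative Hs xs ts) (at xs)" using eqs xsQ by blast
    have tder: "((\<lambda>\<tau>. W (xs,\<tau>)) has_real_derivative (ut xs ts + 2 * n * l)) (at ts)"
      unfolding Wx using dt by (auto intro!: derivative_eq_intros simp: algebra_simps)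
    have tpos: "ut xs ts + 2 * n * l \<ge> 0"
    proof (rule ccontr)
      assume "\<not> ?thesis"
      hence "ut xs ts + 2 * n * l < 0" by simp
      then obtain d where d: "d > 0" "\<forall>hh>0. hh < d \<longrightarrow> W (xs,ts) < W (xs, ts - hh)"
        using DERIV_neg_dec_left[OF tder] by blast
      define hh where "hh = min d (ts - (t0 - r\<^sup>2)) / 2"
      have hh: "hh > 0" "hh < d" "hh < ts - (t0 - r\<^sup>2)" using d int by (auto simp: hh_def)
      have "(xs, ts - hh) \<in> C" using xsC hh by (simp add: C_def)
      hence "W (xs, ts - hh) \<le> W (xs,ts)" using zmax zs by blast
      thus False using d hh by force
    qed
    define \<delta> where "\<delta> = r - norm (xs - x0)"
    have dpos: "\<delta> > 0" using int by (simp add: \<delta>_def)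
    have ballC: "(y, ts) \<in> C" if "y \<in> ball xs \<delta>" for y
    proof -
      have "norm (y - x0) \<le> norm (xs - x0) + norm (y - xs)"
        using norm_triangle_ineq[of "xs - x0" "y - xs"] by simp
      moreover have "norm (y - xs) < \<delta>" using that by (simp add: dist_norm norm_minus_commute)
      ultimately have "dist x0 y \<le> r" by (simp add: \<delta>_def dist_norm norm_minus_commute)
      thus ?thesis using xsC by (simp add: C_def)
    qed
    have sp: "Hs xs ts (axis i 1) $ i \<le> 2 * l" for i
    proof (rule spatial_max[OF dpos _ dHs])
      fix y assume y: "y \<in> ball xs \<delta>"
      have "(y,ts) \<in> Q1" using ballC[OF y] CQ by blast
      thus "((\<lambda>y. u y ts) has_derivative (\<lambda>v. g y ts \<bullet> v)) (at y)" using eqs by blast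
      have "W (y,ts) \<le> W (xs,ts)" using zmax zs ballC[OF y] by blast
      thus "u y ts - l * (norm (y - x0))\<^sup>2 \<le> u xs ts - l * (norm (xs - x0))\<^sup>2"
        by (simp add: algebra_simps)
    qed
    have "(\<Sum>i\<in>UNIV. Hs xs ts (axis i 1) $ i) \<le> (\<Sum>i\<in>(UNIV::'n set). 2 * l)"
      by (rule sum_mono) (rule sp)
    also have "\<dots> = 2 * n * l" by (simp add: n_def)
    finally have sumle: "(\<Sum>i\<in>UNIV. Hs xs ts (axis i 1) $ i) \<le> 2 * n * l" .
    have fle: "f_eps h \<beta> \<gamma> \<epsilon> (u xs ts) \<le> 4 * n * l" using eqn sumle tpos by linarith
    have "f_eps h \<beta> \<gamma> \<epsilon> (u xs ts) \<ge> \<kappa> * M powr (\<gamma> - 1)"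
      using fbound[of "u xs ts"] usM usge Wge ux0 by linarith
    moreover have "\<kappa> * M powr (\<gamma> - 1) = 8 * n * l" unfolding l_def using n1 by simp
    moreover have "n * l > 0" using lpos n1 by simp
    ultimately show False using fle by linarith
  qed
  have P: "(norm (xs - x0))\<^sup>2 + 2 * n * (t0 - ts) \<ge> r\<^sup>2"
    using bdry
  proof
    assume "norm (xs - x0) \<ge> r"
    hence "(norm (xs - x0))\<^sup>2 \<ge> r\<^sup>2" using r0 by (simp add: power_mono)
    moreover have "2 * n * (t0 - ts) \<ge> 0" using xsC n1 by simp
    ultimately show ?thesis by linarith
  next
    assume "ts \<le> t0 - r\<^sup>2"
    hence "2 * n * (t0 - ts) \<ge> 2 * 1 * r\<^sup>2" using n1 r2p
      by (intro mult_mono) auto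
    moreover have "(norm (xs - x0))\<^sup>2 \<ge> 0" by simp
    ultimately show ?thesis using r2p by linarith
  qed
  have "u xs ts = W (xs,ts) + l * ((norm (xs - x0))\<^sup>2 + 2 * n * (t0 - ts))" by simp
  moreover have "l * ((norm (xs - x0))\<^sup>2 + 2 * n * (t0 - ts)) \<ge> l * r\<^sup>2"
    using P lpos by simp
  moreover have "u x0 t0 \<ge> 0" using ux0 th ep by (smt (verit) mult_pos_pos powr_gt_zero)
  ultimately have "M \<ge> l * r\<^sup>2" using usM Wge by linarith
  hence M2: "M \<ge> \<kappa> * M powr (\<gamma> - 1) * r\<^sup>2 / (8 * n)" unfolding l_def by simp
  show ?thesis using M1 M2 unfolding M_def \<kappa>_def n_def by simp
qed


theorem lemma3p6:
  fixes h :: "real \<Rightarrow> real" and \<gamma> \<beta> \<theta> :: real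
  assumes "admissible_h h"
    and "0 < \<gamma>" and "\<gamma> \<le> 1"
    and "\<beta> = 2 / (2 - \<gamma>)"
    and "\<theta> > 0"
  shows "\<exists>c>0. \<forall>(\<epsilon>::real) (u::real^'n \<Rightarrow> real \<Rightarrow> real) (r::real) (x0::real^'n) (t0::real).
           \<epsilon> > 0 \<longrightarrow>
           classical_heat_sol u (\<lambda>v. - f_eps h \<beta> \<gamma> \<epsilon> v) (Qcyl 0 0 1) \<longrightarrow>
           (\<forall>(x,t)\<in>Qcyl 0 0 1. u x t \<ge> 0) \<longrightarrow>
           0 < r \<longrightarrow> r < 1/4 \<longrightarrow>
           (x0, t0) \<in> Qcyl 0 0 (1/2) \<longrightarrow> u x0 t0 \<ge> \<theta> * \<epsilon> powr \<beta> \<longrightarrow>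
           (SUP (x,t)\<in>Qminus x0 t0 r. u x t) \<ge> c * (\<epsilon>\<^sup>2 + r\<^sup>2) powr (1 / (2 - \<gamma>))"
proof -
  note adm = assms(1) and g0 = assms(2) and g1 = assms(3) and bet = assms(4) and th = assms(5)
  define n where "n = real CARD('n)"
  have n1: "n \<ge> 1" unfolding n_def by simp
  define \<kappa> where "\<kappa> = \<gamma> * Hprim h (min \<theta> 1)"
  have kpos: "\<kappa> > 0" unfolding \<kappa>_def using h_facts(3)[OF adm, of "min \<theta> 1"] th g0 by simp
  define A where "A = min (\<theta> powr (2 - \<gamma>)) (\<kappa> / (8 * n))"
  have Apos: "A > 0" unfolding A_def using th kpos n1 by simp
  define e where "e = 1 / (2 - \<gamma>)"
  have epos: "e > 0" using g1 by (simp add: e_def)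
  have ge: "(2 - \<gamma>) * e = 1" using g1 by (simp add: e_def)
  have bg: "\<beta> * (2 - \<gamma>) = 2"
  proof -
    have "2 - \<gamma> \<noteq> 0" using g1 by simp
    thus ?thesis using bet by (simp add: field_simps)
  qed
  show ?thesis
  proof (intro exI[of _ "(A/2) powr e"] conjI allI impI)
    show "(A/2) powr e > 0" using Apos by simp
    fix \<epsilon> :: real and u :: "real^'n \<Rightarrow> real \<Rightarrow> real" and r :: real and x0 :: "real^'n" and t0 :: real
    assume ep: "\<epsilon> > 0" and sol: "classical_heat_sol u (\<lambda>v. - f_eps h \<beta> \<gamma> \<epsilon> v) (Qcyl 0 0 1)"
      and "\<forall>(x,t)\<in>Qcyl 0 0 1. u x t \<ge> 0" and r0: "0 < r" and r1: "r < 1/4"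
      and x0Q: "(x0, t0) \<in> Qcyl 0 0 (1/2)" and ux0: "u x0 t0 \<ge> \<theta> * \<epsilon> powr \<beta>"
    define M where "M = (SUP (x,t)\<in>Qminus x0 t0 r. u x t)"
    have C: "M \<ge> \<theta> * \<epsilon> powr \<beta>" "M \<ge> \<kappa> * M powr (\<gamma> - 1) * r\<^sup>2 / (8 * n)"
      using core[OF adm g0 g1 th ep sol r0 r1 x0Q ux0] unfolding M_def \<kappa>_def n_def by auto
    have Mpos: "M > 0" using C(1) th ep by (smt (verit) mult_pos_pos powr_gt_zero)
    define X where "X = M powr (2 - \<gamma>)"
    have "(\<theta> * \<epsilon> powr \<beta>) powr (2 - \<gamma>) \<le> X"
      unfolding X_def using C(1) th ep g1 by (intro powr_mono2) auto
    moreover have "(\<theta> * \<epsilon> powr \<beta>) powr (2 - \<gamma>) = \<theta> powr (2 - \<gamma>) * \<epsilon>\<^sup>2"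
    proof -
      have "(\<theta> * \<epsilon> powr \<beta>) powr (2 - \<gamma>) = \<theta> powr (2 - \<gamma>) * (\<epsilon> powr \<beta>) powr (2 - \<gamma>)"
        using th ep by (simp add: powr_mult)
      also have "(\<epsilon> powr \<beta>) powr (2 - \<gamma>) = \<epsilon> powr 2" by (simp add: powr_powr bg)
      also have "\<epsilon> powr 2 = \<epsilon>\<^sup>2" using ep by (simp add: powr_numeral)
      finally show ?thesis .
    qed
    ultimately have X1: "X \<ge> \<theta> powr (2 - \<gamma>) * \<epsilon>\<^sup>2" by simp
    have X2: "X \<ge> \<kappa> * r\<^sup>2 / (8 * n)"
    proof -
      have mp: "M powr (1 - \<gamma>) > 0" using Mpos by simp
      have "M * M powr (1 - \<gamma>) \<ge> \<kappa> * M powr (\<gamma> - 1) * r\<^sup>2 / (8 * n) * M powr (1 - \<gamma>)"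
        using mult_right_mono[OF C(2) less_imp_le[OF mp]] by simp
      moreover have "M powr (\<gamma> - 1) * M powr (1 - \<gamma>) = 1" using Mpos by (simp add: powr_add[symmetric])
      moreover have "M * M powr (1 - \<gamma>) = X"
      proof -
        have "M powr (2 - \<gamma>) = M powr (1 + (1 - \<gamma>))" by simp
        also have "\<dots> = M powr 1 * M powr (1 - \<gamma>)" by (rule powr_add)
        finally show ?thesis using Mpos by (simp add: X_def)
      qed
      ultimately show ?thesis by (simp add: field_simps)
    qed
    have "A * \<epsilon>\<^sup>2 \<le> X" using X1 by (smt (verit) A_def min.cobounded1 mult_right_mono zero_le_power2)
    moreover have "A * r\<^sup>2 \<le> X" using X2 n1
      by (smt (verit) A_def min.cobounded2 mult_right_mono zero_le_power2 times_divide_eq_left mult.commute)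
    ultimately have X3: "A / 2 * (\<epsilon>\<^sup>2 + r\<^sup>2) \<le> X" by (simp add: field_simps)
    have "(A / 2 * (\<epsilon>\<^sup>2 + r\<^sup>2)) powr e \<le> X powr e"
      using X3 Apos epos by (intro powr_mono2) auto
    moreover have "X powr e = M" unfolding X_def using Mpos by (simp add: powr_powr ge)
    moreover have "(A / 2 * (\<epsilon>\<^sup>2 + r\<^sup>2)) powr e = (A/2) powr e * (\<epsilon>\<^sup>2 + r\<^sup>2) powr e"
      using Apos powr_mult[of "A/2" "\<epsilon>\<^sup>2 + r\<^sup>2" e] by simp
    ultimately show "(SUP (x,t)\<in>Qminus x0 t0 r. u x t) \<ge> (A/2) powr e * (\<epsilon>\<^sup>2 + r\<^sup>2) powr (1 / (2 - \<gamma>))"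
      unfolding M_def e_def by simp
  qed
qed

end
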